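(* Let $\Pi=((p_1,\dots,p_n),(P_1,\dots,P_n),(d_1,\dots,d_n))$ be an $n$-pod. If $\Pi$ has a collinearity bond, then $p_1,\dots,p_n$ are collinear or $P_1,\dots,P_n$ are collinear (or both). Conversely, if $p_1,\dots,p_n$ are collinear or $P_1,\dots,P_n$ are collinear (or both), then $\Pi$ has a collinearity bond.
   Context: An $n$-pod is a triple of platform points $p_i\in\mathbb{R}^3$, base points $P_i\in\mathbb{R}^3$ and leg lengths $d_i\ge0$. Write a direct isometry as $v\mapsto Mv+y$ ($M\in SO(3)$) and put $x=-M^ty$, $r=\langle y,y\rangle$. It corresponds to $(h:M:x:y:r)=(1:m_{11}:\dots:m_{33}:x_1:x_2:x_3:y_1:y_2:y_3:r)\in\mathbb{P}^{16}_{\mathbb{C}}$. $X$ is the complex Zariski closure of all such points. Throughout, $\langle u,u'\rangle=u^tu'$ is the complex bilinear form on $\mathbb{C}^3$. Let $l_i$ be the linear form $$-d_i^2h+(\langle p_i,p_i\rangle+\langle P_i,P_i\rangle)h+r-2\langle p_i,x\rangle-2\langle y,P_i\rangle-2\langle Mp_i,P_i\rangle.$$ Define: - $K_\Pi=X\cap\{l_1=\dots=l_n=0\}$; - $B=X\cap\{h=0\}$; - the set of bonds $B_\Pi=K_\Pi\cap B$. A collinearity point is a point $(0:M:x:y:r)\in B$ with $M=0$ and exactly one of $x,y$ equal to zero. A collinearity bond is a bond which is a collinearity point. *)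

theory Defs
  imports "HOL-Analysis.Analysis"
begin

text \<open>Points of P^16 are represented by their (affine cone) coordinate vectors
  v :: nat => complex, with coordinates
  0 = h, 1+3j+k = m_(j+1)(k+1) (j,k<3, row-major), 10+k = x_(k+1), 13+k = y_(k+1), 16 = r.
  Coordinates >= 17 are not used (they vanish on X).\<close>

definition comp3 :: "real^3 \<Rightarrow> nat \<Rightarrow> real" where
  "comp3 u k = u $ (of_nat k :: 3)"

definition hC :: "(nat \<Rightarrow> complex) \<Rightarrow> complex" where "hC v = v 0"
definition mC :: "(nat \<Rightarrow> complex) \<Rightarrow> nat \<Rightarrow> nat \<Rightarrow> complex" where "mC v j k = v (1 + 3*j + k)"
definition xC :: "(nat \<Rightarrow> complex) \<Rightarrow> nat \<Rightarrow> complex" where "xC v k = v (10 + k)"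
definition yC :: "(nat \<Rightarrow> complex) \<Rightarrow> nat \<Rightarrow> complex" where "yC v k = v (13 + k)"
definition rC :: "(nat \<Rightarrow> complex) \<Rightarrow> complex" where "rC v = v 16"

text \<open>The point (1:M:x:y:r) attached to the direct isometry v |-> Mv+y.\<close>
definition iso_point :: "real^3^3 \<Rightarrow> real^3 \<Rightarrow> nat \<Rightarrow> complex" where
  "iso_point M y i =
     (if i = 0 then 1
      else if i < 10 then complex_of_real (comp3 (M $ (of_nat ((i - 1) div 3))) ((i - 1) mod 3))
      else if i < 13 then complex_of_real (comp3 (- (transpose M *v y)) (i - 10))
      else if i < 16 then complex_of_real (comp3 y (i - 13))
      else if i = 16 then complex_of_real (y \<bullet> y)
      else 0)"

inductive_set polyfun :: "((nat \<Rightarrow> complex) \<Rightarrow> complex) set" where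
  pf_const: "(\<lambda>v. c) \<in> polyfun"
| pf_var: "(\<lambda>v. v i) \<in> polyfun"
| pf_add: "f \<in> polyfun \<Longrightarrow> g \<in> polyfun \<Longrightarrow> (\<lambda>v. f v + g v) \<in> polyfun"
| pf_mult: "f \<in> polyfun \<Longrightarrow> g \<in> polyfun \<Longrightarrow> (\<lambda>v. f v * g v) \<in> polyfun"

definition zariski_closure :: "(nat \<Rightarrow> complex) set \<Rightarrow> (nat \<Rightarrow> complex) set" where
  "zariski_closure S = {v. \<forall>f\<in>polyfun. (\<forall>w\<in>S. f w = 0) \<longrightarrow> f v = 0}"

definition iso_cone :: "(nat \<Rightarrow> complex) set" where
  "iso_cone = {(\<lambda>i. c * iso_point M y i) | c M y.
                 orthogonal_matrix M \<and> det M = 1}"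

text \<open>Affine cone over X (the Zariski closure in P^16); a point of X is a nonzero element.\<close>
definition Xcone :: "(nat \<Rightarrow> complex) set" where
  "Xcone = zariski_closure iso_cone"

definition lform :: "real^3 \<Rightarrow> real^3 \<Rightarrow> real \<Rightarrow> (nat \<Rightarrow> complex) \<Rightarrow> complex" where
  "lform p P d v =
     complex_of_real (- (d ^ 2) + p \<bullet> p + P \<bullet> P) * hC v + rC v
     - 2 * (\<Sum>k<3. complex_of_real (comp3 p k) * xC v k)
     - 2 * (\<Sum>k<3. yC v k * complex_of_real (comp3 P k))
     - 2 * (\<Sum>j<3. \<Sum>k<3. complex_of_real (comp3 P j) * mC v j k * complex_of_real (comp3 p k))"

definition K_Pi :: "nat \<Rightarrow> (nat \<Rightarrow> real^3) \<Rightarrow> (nat \<Rightarrow> real^3) \<Rightarrow> (nat \<Rightarrow> real) \<Rightarrow> (nat \<Rightarrow> complex) set" where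
  "K_Pi n p P d = {v \<in> Xcone. v \<noteq> (\<lambda>_. 0) \<and> (\<forall>i<n. lform (p i) (P i) (d i) v = 0)}"

definition B_set :: "(nat \<Rightarrow> complex) set" where
  "B_set = {v \<in> Xcone. v \<noteq> (\<lambda>_. 0) \<and> hC v = 0}"

definition bonds :: "nat \<Rightarrow> (nat \<Rightarrow> real^3) \<Rightarrow> (nat \<Rightarrow> real^3) \<Rightarrow> (nat \<Rightarrow> real) \<Rightarrow> (nat \<Rightarrow> complex) set" where
  "bonds n p P d = K_Pi n p P d \<inter> B_set"

definition collinearity_point :: "(nat \<Rightarrow> complex) \<Rightarrow> bool" where
  "collinearity_point v \<longleftrightarrow> v \<in> B_set \<and> hC v = 0 \<and> (\<forall>j<3. \<forall>k<3. mC v j k = 0) \<and>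
     ((\<forall>k<3. xC v k = 0) \<noteq> (\<forall>k<3. yC v k = 0))"

definition has_collinearity_bond :: "nat \<Rightarrow> (nat \<Rightarrow> real^3) \<Rightarrow> (nat \<Rightarrow> real^3) \<Rightarrow> (nat \<Rightarrow> real) \<Rightarrow> bool" where
  "has_collinearity_bond n p P d \<longleftrightarrow> (\<exists>v \<in> bonds n p P d. collinearity_point v)"

end

theory Submission
  imports Defs "HOL-Complex_Analysis.Conformal_Mappings"
begin


lemma zero_eq_3: "(0::3) = 3" by (rule sym, simp)

lemma comp3_simps [simp]: "comp3 u 0 = u$3" "comp3 u (Suc 0) = u$1" "comp3 u 2 = u$2"
  unfolding comp3_def by (simp only: of_nat_0 zero_eq_3, simp, simp)

lemma lessThan3: "{..<3::nat} = {0, Suc 0, 2}" by auto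

lemma sum_lt3: "(\<Sum>k<3::nat. f k) = f 0 + f (Suc 0) + f 2"
  unfolding lessThan3 by (simp add: ac_simps)



lemma pf_diff: "f \<in> polyfun \<Longrightarrow> g \<in> polyfun \<Longrightarrow> (\<lambda>v. f v - g v) \<in> polyfun"
proof -
  assume "f \<in> polyfun" "g \<in> polyfun"
  hence "(\<lambda>v. f v + (\<lambda>v. -1) v * g v) \<in> polyfun" by (intro pf_add pf_mult pf_const)
  thus ?thesis by simp
qed

lemma pf_sum: "finite A \<Longrightarrow> (\<And>k. k \<in> A \<Longrightarrow> (\<lambda>v. f k v) \<in> polyfun) \<Longrightarrow> (\<lambda>v. \<Sum>k\<in>A. f k v) \<in> polyfun"
proof (induction A rule: finite_induct)
  case empty then show ?case using pf_const[of 0] by simp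
next
  case (insert x F) then show ?case by (simp add: pf_add)
qed

definition Qx :: "(nat \<Rightarrow> complex) \<Rightarrow> complex" where
  "Qx v = (\<Sum>k<3. xC v k * xC v k) - rC v * hC v"
definition Qy :: "(nat \<Rightarrow> complex) \<Rightarrow> complex" where
  "Qy v = (\<Sum>k<3. yC v k * yC v k) - rC v * hC v"

lemma Qx_pf: "Qx \<in> polyfun"
  unfolding Qx_def xC_def rC_def hC_def
  by (intro pf_diff pf_sum pf_mult pf_var) auto
lemma Qy_pf: "Qy \<in> polyfun"
  unfolding Qy_def yC_def rC_def hC_def
  by (intro pf_diff pf_sum pf_mult pf_var) auto

lemma orth_norm: "orthogonal_matrix M \<Longrightarrow> (transpose M *v y) \<bullet> (transpose M *v y) = y \<bullet> (y::real^'n)"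
  by (metis dot_lmul_matrix orthogonal_matrix_def transpose_matrix_vector
    vector_matrix_mul_assoc vector_matrix_mul_rid)

lemma Qx_iso: "v \<in> iso_cone \<Longrightarrow> Qx v = 0"
proof -
  assume "v \<in> iso_cone"
  then obtain c M y where v: "v = (\<lambda>i. c * iso_point M y i)" and M: "orthogonal_matrix M"
    unfolding iso_cone_def by blast
  define w where "w = y v* M"
  have ww: "w \<bullet> w = y \<bullet> y" using orth_norm[OF M, of y] w_def by simp
  have "Qx v = c*c * complex_of_real (w \<bullet> w) - c * complex_of_real (y \<bullet> y) * c"
    unfolding Qx_def sum_lt3 v xC_def rC_def hC_def
    by (simp add: iso_point_def w_def[symmetric] inner_vec_def sum_3 algebra_simps)
  thus ?thesis using ww by simp
qed

lemma Qy_iso: "v \<in> iso_cone \<Longrightarrow> Qy v = 0"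
proof -
  assume "v \<in> iso_cone"
  then obtain c M y where v: "v = (\<lambda>i. c * iso_point M y i)" and M: "orthogonal_matrix M"
    unfolding iso_cone_def by blast
  have "Qy v = c*c * complex_of_real (y \<bullet> y) - c * complex_of_real (y \<bullet> y) * c"
    unfolding Qy_def sum_lt3 v yC_def rC_def hC_def
    by (simp add: iso_point_def inner_vec_def sum_3 algebra_simps)
  thus ?thesis by simp
qed

lemma Q_X: "v \<in> Xcone \<Longrightarrow> Qx v = 0 \<and> Qy v = 0"
  unfolding Xcone_def zariski_closure_def using Qx_pf Qy_pf Qx_iso Qy_iso by blast



lemma cross_triple: "cross3 w (cross3 a b) = (w \<bullet> b) *\<^sub>R a - (w \<bullet> a) *\<^sub>R b"
  by (simp add: cross3_def vec_eq_iff forall_3 inner_vec_def sum_3 vector_3 algebra_simps)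

lemma LA:
  fixes a b :: "real^3" and p :: "nat \<Rightarrow> real^3"
  assumes ab: "a \<bullet> a = b \<bullet> b" "a \<bullet> b = 0" and nz: "a \<noteq> 0 \<or> b \<noteq> 0"
    and orth: "\<And>i j. i < n \<Longrightarrow> j < n \<Longrightarrow> (p i - p j) \<bullet> a = 0 \<and> (p i - p j) \<bullet> b = 0"
  shows "collinear (p ` {..<n})"
proof -
  have "a \<noteq> 0" "b \<noteq> 0" using ab nz by auto
  hence "norm a > 0" "norm b > 0" by auto
  have "(norm (cross3 a b))\<^sup>2 = (norm a * norm b)\<^sup>2" using norm_cross_dot[of a b] ab by simp
  hence u: "cross3 a b \<noteq> 0" using \<open>norm a > 0\<close> \<open>norm b > 0\<close> by auto
  show ?thesis unfolding collinear_def
  proof (rule exI[of _ "cross3 a b"], intro ballI)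
    fix x y assume "x \<in> p ` {..<n}" "y \<in> p ` {..<n}"
    then obtain i j where ij: "i < n" "j < n" "x = p i" "y = p j" by auto
    have "cross3 (x - y) (cross3 a b) = 0" using orth[OF ij(1,2)] ij by (simp add: cross_triple)
    hence "collinear {0, cross3 a b, x - y}" by (metis cross_eq_0 insert_commute)
    then show "\<exists>c. x - y = c *\<^sub>R (cross3 a b)" using u collinear_lemma
      by (metis scale_zero_left)
  qed
qed



lemma lform_simp:
  assumes "hC v = 0" "\<forall>j<3. \<forall>k<3. mC v j k = 0" "\<forall>k<3. yC v k = 0"
  shows "lform p P d v = rC v - 2 * (\<Sum>k<3. complex_of_real (comp3 p k) * xC v k)"
proof -
  have "(\<Sum>k<3. yC v k * complex_of_real (comp3 P k)) = 0" using assms(3) by (intro sum.neutral) auto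
  moreover have "(\<Sum>j<3. \<Sum>k<3. complex_of_real (comp3 P j) * mC v j k * complex_of_real (comp3 p k)) = 0"
    using assms(2) by (intro sum.neutral) auto
  ultimately show ?thesis unfolding lform_def using assms(1) by simp
qed

lemma onlyif_x:
  fixes n :: nat and p P :: "nat \<Rightarrow> real^3" and d :: "nat \<Rightarrow> real"
  assumes X: "v \<in> Xcone" and h: "hC v = 0" and m: "\<forall>j<3. \<forall>k<3. mC v j k = 0"
    and y: "\<forall>k<3. yC v k = 0" and x: "\<not> (\<forall>k<3. xC v k = 0)"
    and l: "\<forall>i<n. lform (p i) (P i) (d i) v = 0"
  shows "collinear (p ` {..<n})"
proof -
  define a :: "real^3" where "a = vector [Re (xC v 1), Re (xC v 2), Re (xC v 0)]"
  define b :: "real^3" where "b = vector [Im (xC v 1), Im (xC v 2), Im (xC v 0)]"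
  have Q: "(\<Sum>k<3. xC v k * xC v k) = 0" using Q_X[OF X] h unfolding Qx_def by simp
  hence q: "Re (\<Sum>k<3. xC v k * xC v k) = 0" "Im (\<Sum>k<3. xC v k * xC v k) = 0" by simp_all
  have ab1: "a \<bullet> a = b \<bullet> b" using q(1) unfolding sum_lt3 a_def b_def
    by (simp add: inner_vec_def sum_3 vector_3 algebra_simps)
  have ab2: "a \<bullet> b = 0" using q(2) unfolding sum_lt3 a_def b_def
    by (simp add: inner_vec_def sum_3 vector_3 algebra_simps)
  have nz: "a \<noteq> 0 \<or> b \<noteq> 0"
  proof (rule ccontr)
    assume "\<not> ?thesis"
    hence "a $ 1 = 0" "a $ 2 = 0" "a $ 3 = 0" "b $ 1 = 0" "b $ 2 = 0" "b $ 3 = 0" by auto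
    hence "xC v 0 = 0" "xC v 1 = 0" "xC v 2 = 0" unfolding a_def b_def
      by (simp_all add: vector_3 complex_eq_iff)
    hence "\<forall>k<3. xC v k = 0" by (simp add: lessThan3 flip: lessThan_iff)
    thus False using x by simp
  qed
  have L: "rC v = 2 * (\<Sum>k<3. complex_of_real (comp3 (p i) k) * xC v k)" if "i < n" for i
    using l that lform_simp[OF h m y, of "p i" "P i" "d i"] by simp
  have orth: "(p i - p j) \<bullet> a = 0 \<and> (p i - p j) \<bullet> b = 0" if "i < n" "j < n" for i j
  proof -
    have "(\<Sum>k<3. complex_of_real (comp3 (p i) k) * xC v k) - (\<Sum>k<3. complex_of_real (comp3 (p j) k) * xC v k) = 0"
      using L[OF that(1)] L[OF that(2)] by simp
    hence "Re ((\<Sum>k<3. complex_of_real (comp3 (p i) k) * xC v k) - (\<Sum>k<3. complex_of_real (comp3 (p j) k) * xC v k)) = 0"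
      "Im ((\<Sum>k<3. complex_of_real (comp3 (p i) k) * xC v k) - (\<Sum>k<3. complex_of_real (comp3 (p j) k) * xC v k)) = 0"
      by simp_all
    thus ?thesis unfolding sum_lt3 a_def b_def
      by (simp add: inner_vec_def sum_3 vector_3 algebra_simps)
  qed
  show ?thesis using LA[OF ab1 ab2 nz, of n p] orth by blast
qed



lemma pf_holo: "g \<in> polyfun \<Longrightarrow> (\<lambda>t. g (z(m:=t))) holomorphic_on UNIV"
proof (induction rule: polyfun.induct)
  case (pf_var i) then show ?case by (cases "i = m") auto
qed (auto intro!: holomorphic_intros)

lemma identity_real:
  assumes "h holomorphic_on UNIV" "\<And>t. t \<in> \<real> \<Longrightarrow> t \<noteq> 0 \<Longrightarrow> h t = 0"
  shows "h w = 0"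
proof (rule analytic_continuation[OF assms(1), of "{t \<in> \<real>. t \<noteq> 0}" 1])
  show "(1::complex) islimpt {t \<in> \<real>. t \<noteq> 0}"
  proof (rule islimpt_approachable[THEN iffD2], intro allI impI)
    fix e :: real assume e: "0 < e"
    have "complex_of_real (1 + e/2) \<in> {t \<in> \<real>. t \<noteq> 0}" using e
      by (auto simp del: of_real_add)
    moreover have "complex_of_real (1 + e/2) \<noteq> 1" using e by (auto simp del: of_real_add)
    moreover have "dist (complex_of_real (1 + e/2)) 1 < e"
    proof -
      have eq: "complex_of_real (1 + e/2) - 1 = complex_of_real (e/2)" by simp
      show ?thesis unfolding dist_norm eq norm_of_real using e by simp
    qed
    ultimately show "\<exists>x'::complex\<in>{t \<in> \<real>. t \<noteq> 0}. x' \<noteq> 1 \<and> dist x' 1 < e" by blast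
  qed
qed (use assms in auto)

lemma continuation:
  assumes g: "g \<in> polyfun"
    and hyp: "\<And>z. (\<forall>i<K. z i \<in> \<real>) \<Longrightarrow> z 0 \<noteq> 0 \<Longrightarrow> g z = 0"
  shows "\<forall>z. (\<forall>i. m \<le> i \<and> i < K \<longrightarrow> z i \<in> \<real>) \<longrightarrow> g z = 0"
proof (induction m)
  case 0
  show ?case
  proof (intro allI impI)
    fix z :: "nat \<Rightarrow> complex" assume zr: "\<forall>i. 0 \<le> i \<and> i < K \<longrightarrow> z i \<in> \<real>"
    have "(\<lambda>t. g (z(0:=t))) (z 0) = 0"
    proof (rule identity_real[OF pf_holo[OF g]])
      fix t :: complex assume "t \<in> \<real>" "t \<noteq> 0"
      thus "g (z(0:=t)) = 0" using zr by (intro hyp) auto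
    qed
    thus "g z = 0" by simp
  qed
next
  case (Suc m)
  show ?case
  proof (intro allI impI)
    fix z :: "nat \<Rightarrow> complex" assume zr: "\<forall>i. Suc m \<le> i \<and> i < K \<longrightarrow> z i \<in> \<real>"
    have "(\<lambda>t. g (z(m:=t))) (z m) = 0"
    proof (rule identity_real[OF pf_holo[OF g]])
      fix t :: complex assume "t \<in> \<real>" "t \<noteq> 0"
      thus "g (z(m:=t)) = 0" using zr Suc.IH
        by (metis fun_upd_apply not_less_eq_eq le_antisym)
    qed
    thus "g z = 0" by simp
  qed
qed

lemma continuation_all:
  assumes g: "g \<in> polyfun"
    and hyp: "\<And>z. (\<forall>i<K. z i \<in> \<real>) \<Longrightarrow> z 0 \<noteq> 0 \<Longrightarrow> g z = 0"
  shows "g z = 0"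
proof -
  have "\<forall>z. (\<forall>i. K \<le> i \<and> i < K \<longrightarrow> z i \<in> \<real>) \<longrightarrow> g z = 0" by (rule continuation[OF g hyp])
  thus ?thesis by auto
qed

lemma pf_comp:
  assumes "f \<in> polyfun" "\<And>i. (\<lambda>z. \<Phi> z i) \<in> polyfun"
  shows "(\<lambda>z. f (\<Phi> z)) \<in> polyfun"
  using assms(1)
proof (induction rule: polyfun.induct)
  case (pf_const c) show ?case by (rule polyfun.pf_const)
next
  case (pf_var i) show ?case using assms(2) .
next
  case (pf_add f g) then show ?case using polyfun.pf_add by blast
next
  case (pf_mult f g) then show ?case using polyfun.pf_mult by blast
qed

lemma family_in_X:
  assumes pf: "\<And>i. (\<lambda>z. \<Phi> z i) \<in> polyfun"
    and real: "\<And>z. (\<forall>i<K. z i \<in> \<real>) \<Longrightarrow> z 0 \<noteq> 0 \<Longrightarrow> \<Phi> z \<in> iso_cone"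
  shows "\<Phi> z \<in> Xcone"
  unfolding Xcone_def zariski_closure_def
proof (intro CollectI ballI impI)
  fix f assume f: "f \<in> polyfun" and van: "\<forall>w\<in>iso_cone. f w = 0"
  show "f (\<Phi> z) = 0"
    by (rule continuation_all[OF pf_comp[OF f pf], of K]) (use van real in auto)
qed



definition Ngen :: "(nat \<Rightarrow> 'a::comm_ring_1) \<Rightarrow> nat \<Rightarrow> nat \<Rightarrow> 'a" where
  "Ngen z j k =
    (if j = 0 then
       (if k = 0 then z 0 * z 0 + z 1 * z 1 - z 2 * z 2 - z 3 * z 3
        else if k = 1 then 2 * (z 1 * z 2 - z 0 * z 3)
        else 2 * (z 1 * z 3 + z 0 * z 2))
     else if j = 1 then
       (if k = 0 then 2 * (z 1 * z 2 + z 0 * z 3)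
        else if k = 1 then z 0 * z 0 - z 1 * z 1 + z 2 * z 2 - z 3 * z 3
        else 2 * (z 2 * z 3 - z 0 * z 1))
     else
       (if k = 0 then 2 * (z 1 * z 3 - z 0 * z 2)
        else if k = 1 then 2 * (z 2 * z 3 + z 0 * z 1)
        else z 0 * z 0 - z 1 * z 1 - z 2 * z 2 + z 3 * z 3))"

definition sgen :: "(nat \<Rightarrow> 'a::comm_ring_1) \<Rightarrow> 'a" where
  "sgen z = z 0 * z 0 + z 1 * z 1 + z 2 * z 2 + z 3 * z 3"

definition mk3 :: "(nat \<Rightarrow> nat \<Rightarrow> real) \<Rightarrow> real^3^3" where
  "mk3 f = vector [vector [f 1 1, f 1 2, f 1 0], vector [f 2 1, f 2 2, f 2 0], vector [f 0 1, f 0 2, f 0 0]]"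

definition vec3 :: "(nat \<Rightarrow> real) \<Rightarrow> real^3" where
  "vec3 g = vector [g 1, g 2, g 0]"

lemma rot_orth:
  fixes r :: "nat \<Rightarrow> real"
  assumes s: "sgen r \<noteq> 0"
  shows "orthogonal_matrix (mk3 (\<lambda>j k. Ngen r j k / sgen r))"
  unfolding orthogonal_matrix_def mk3_def
  apply (simp add: matrix_matrix_mult_def transpose_def mat_def vec_eq_iff forall_3 sum_3 vector_3 Ngen_def)
  using s
  apply (simp add: field_simps)
  apply (simp add: sgen_def)
  apply algebra
  done

lemma rot_det:
  fixes r :: "nat \<Rightarrow> real"
  assumes s: "sgen r \<noteq> 0"
  shows "det (mk3 (\<lambda>j k. Ngen r j k / sgen r)) = 1"
  unfolding mk3_def det_3
  using s
  apply (simp add: vector_3 Ngen_def field_simps)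
  apply (simp add: sgen_def)
  apply algebra
  done



lemma idx0: "(v::'a^3) $ 0 = v $ 3"
proof - have "(0::3) = 3" by (rule sym, simp) thus ?thesis by (rule arg_cong) qed

lemma lt3_cases: "(k::nat) < 3 \<Longrightarrow> k = 0 \<or> k = 1 \<or> k = 2" by auto

lemma C3: "j < 3 \<Longrightarrow> k < 3 \<Longrightarrow> comp3 (mk3 f $ of_nat j) k = f j k"
  by (auto dest!: lt3_cases simp: comp3_def mk3_def idx0 vector_3)

lemma C4: "k < 3 \<Longrightarrow> comp3 (vec3 g) k = g k"
  by (auto dest!: lt3_cases simp: comp3_def vec3_def idx0 vector_3)

lemma C1: "k < 3 \<Longrightarrow> comp3 (transpose M *v y) k = (\<Sum>j<3. comp3 (M $ of_nat j) k * comp3 y j)"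
  by (auto dest!: lt3_cases simp: comp3_def idx0 sum_lt3 sum_3 vector_matrix_mult_def)

lemma C2: "k < 3 \<Longrightarrow> comp3 (M *v y) k = (\<Sum>j<3. comp3 (M $ of_nat k) j * comp3 y j)"
  by (auto dest!: lt3_cases simp: comp3_def idx0 sum_lt3 sum_3 matrix_vector_mult_def)

lemma C5: "comp3 (- u) k = - comp3 u k" by (simp add: comp3_def)

lemma C6: "u \<bullet> w = (\<Sum>k<3. comp3 u k * comp3 w k)"
  by (simp add: sum_lt3 inner_vec_def sum_3)

definition Phi1 :: "(nat \<Rightarrow> complex) \<Rightarrow> nat \<Rightarrow> complex" where
  "Phi1 z i =
    (if i = 0 then sgen z * sgen z
     else if i < 10 then sgen z * Ngen z ((i - 1) div 3) ((i - 1) mod 3)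
     else if i < 13 then - (\<Sum>j<3. Ngen z j (i - 10) * z (4 + j))
     else if i < 16 then sgen z * z (4 + (i - 13))
     else if i = 16 then (\<Sum>k<3. z (4 + k) * z (4 + k))
     else 0)"

definition Phi2 :: "(nat \<Rightarrow> complex) \<Rightarrow> nat \<Rightarrow> complex" where
  "Phi2 z i =
    (if i = 0 then sgen z * sgen z
     else if i < 10 then sgen z * Ngen z ((i - 1) div 3) ((i - 1) mod 3)
     else if i < 13 then sgen z * z (4 + (i - 10))
     else if i < 16 then - (\<Sum>k<3. Ngen z (i - 13) k * z (4 + k))
     else if i = 16 then (\<Sum>k<3. z (4 + k) * z (4 + k))
     else 0)"

lemma pf_if: "f \<in> polyfun \<Longrightarrow> g \<in> polyfun \<Longrightarrow> (\<lambda>v. if b then f v else g v) \<in> polyfun"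
  by (cases b) auto

lemma pf_neg: "f \<in> polyfun \<Longrightarrow> (\<lambda>v. - f v) \<in> polyfun"
  using pf_diff[OF pf_const[of 0]] by simp

lemmas pf_intros = pf_if pf_neg pf_diff pf_add pf_mult pf_var pf_const

lemma Ngen_pf: "(\<lambda>z. Ngen z j k) \<in> polyfun"
  unfolding Ngen_def by (intro pf_intros)

lemma sgen_pf: "(\<lambda>z. sgen z) \<in> polyfun"
  unfolding sgen_def by (intro pf_intros)

lemma Phi1_pf: "(\<lambda>z. Phi1 z i) \<in> polyfun"
  unfolding Phi1_def sum_lt3 by (intro pf_intros Ngen_pf sgen_pf)

lemma Phi2_pf: "(\<lambda>z. Phi2 z i) \<in> polyfun"
  unfolding Phi2_def sum_lt3 by (intro pf_intros Ngen_pf sgen_pf)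

lemma mv_neg: "(A::real^'n^'m) *v (- v) = - (A *v v)"
  by (simp add: matrix_vector_mult_def vec_eq_iff sum_negf)

lemma real_setup:
  assumes zr: "\<forall>i<7. z i \<in> \<real>" and z0: "z 0 \<noteq> 0"
  defines "r \<equiv> \<lambda>i. Re (z i)"
  shows "\<And>i. i < 7 \<Longrightarrow> z i = complex_of_real (r i)"
    and "\<And>j k. Ngen z j k = complex_of_real (Ngen r j k)"
    and "sgen z = complex_of_real (sgen r)"
    and "sgen r > 0"
proof -
  show zi: "\<And>i. i < 7 \<Longrightarrow> z i = complex_of_real (r i)"
    using zr unfolding r_def by (auto simp: Reals_def)
  have z: "z 0 = complex_of_real (r 0)" "z 1 = complex_of_real (r 1)" "z 2 = complex_of_real (r 2)"
     "z 3 = complex_of_real (r 3)" using zi by auto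
  show "\<And>j k. Ngen z j k = complex_of_real (Ngen r j k)"
    unfolding Ngen_def z by simp
  show "sgen z = complex_of_real (sgen r)" unfolding sgen_def z by simp
  have "r 0 \<noteq> 0" using z0 z by auto
  hence "r 0 * r 0 > 0" by (simp add: zero_less_mult_iff linorder_neq_iff disj_commute)
  moreover have "r 1 * r 1 + r 2 * r 2 + r 3 * r 3 \<ge> 0" by simp
  ultimately show "sgen r > 0" unfolding sgen_def by linarith
qed

lemma Phi1_real:
  assumes zr: "\<forall>i<7. z i \<in> \<real>" and z0: "z 0 \<noteq> 0"
  shows "Phi1 z \<in> iso_cone"
proof -
  define r where "r = (\<lambda>i. Re (z i))"
  note R = real_setup[OF zr z0, folded r_def]
  define s where "s = sgen r"
  have s: "s > 0" "s \<noteq> 0" using R(4) s_def by auto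
  define M where "M = mk3 (\<lambda>j k. Ngen r j k / s)"
  define y where "y = vec3 (\<lambda>k. r (4 + k) / s)"
  have zz: "\<And>j. j < 3 \<Longrightarrow> z (4 + j) = complex_of_real (r (4 + j))" using R(1) by (auto simp: r_def)
  have eq: "Phi1 z = (\<lambda>i. complex_of_real (s * s) * iso_point M y i)"
  proof
    fix i :: nat
    consider "i = 0" | "0 < i" "i < 10" | "10 \<le> i" "i < 13" | "13 \<le> i" "i < 16" | "i = 16" | "16 < i"
      by linarith
    then show "Phi1 z i = complex_of_real (s * s) * iso_point M y i"
    proof cases
      case 1 then show ?thesis by (simp add: Phi1_def iso_point_def R(3) s_def)
    next
      case 2
      have "comp3 (M $ of_nat ((i - 1) div 3)) ((i - 1) mod 3) = Ngen r ((i - 1) div 3) ((i - 1) mod 3) / s"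
        unfolding M_def using 2 by (intro C3) auto
      then show ?thesis using 2 s by (simp add: Phi1_def iso_point_def R(2,3) s_def[symmetric] field_simps flip: of_real_mult)
    next
      case 3
      have k: "i - 10 < 3" using 3 by auto
      have c: "comp3 (- (transpose M *v y)) (i - 10) = - (\<Sum>j<3. Ngen r j (i - 10) / s * (r (4 + j) / s))"
        unfolding C5 C1[OF k] M_def y_def using k by (simp add: C3 C4)
      have c2: "s * s * comp3 (- (transpose M *v y)) (i - 10) = - (\<Sum>j<3. Ngen r j (i - 10) * r (4 + j))"
        unfolding c using s by (simp add: sum_lt3 field_simps)
      have c3: "(\<Sum>j<3. Ngen z j (i - 10) * z (4 + j)) = complex_of_real (\<Sum>j<3. Ngen r j (i - 10) * r (4 + j))"
        by (simp add: R(2) zz)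
      have "Phi1 z i = - complex_of_real (\<Sum>j<3. Ngen r j (i - 10) * r (4 + j))"
        using 3 c3 by (simp add: Phi1_def)
      also have "\<dots> = complex_of_real (s * s * comp3 (- (transpose M *v y)) (i - 10))"
        unfolding c2 by simp
      also have "\<dots> = complex_of_real (s * s) * iso_point M y i"
        using 3 by (simp add: iso_point_def)
      finally show ?thesis .
    next
      case 4
      have k: "i - 13 < 3" using 4 by auto
      have c: "s * s * comp3 y (i - 13) = s * r (4 + (i - 13))" unfolding y_def C4[OF k] using s by simp
      have "Phi1 z i = complex_of_real (s * r (4 + (i - 13)))"
        using 4 zz[OF k] by (simp add: Phi1_def R(3) s_def)
      also have "\<dots> = complex_of_real (s * s) * complex_of_real (comp3 y (i - 13))"
        by (simp only: of_real_mult[symmetric] c)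
      also have "\<dots> = complex_of_real (s * s) * iso_point M y i"
        using 4 by (simp add: iso_point_def)
      finally show ?thesis .
    next
      case 5
      have "y \<bullet> y = (\<Sum>k<3. (r (4 + k) / s) * (r (4 + k) / s))" unfolding C6 y_def by (simp add: C4)
      hence c: "s * s * (y \<bullet> y) = (\<Sum>k<3. r (4 + k) * r (4 + k))" using s by (simp add: sum_lt3 field_simps)
      have "Phi1 z i = complex_of_real (\<Sum>k<3. r (4 + k) * r (4 + k))"
        using 5 by (simp add: Phi1_def zz)
      also have "\<dots> = complex_of_real (s * s) * complex_of_real (y \<bullet> y)"
        by (simp only: of_real_mult[symmetric] c)
      also have "\<dots> = complex_of_real (s * s) * iso_point M y i"
        using 5 by (simp add: iso_point_def)
      finally show ?thesis .
    next
      case 6 then show ?thesis by (simp add: Phi1_def iso_point_def)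
    qed
  qed
  have "orthogonal_matrix M" "det M = 1" unfolding M_def s_def using R(4) by (auto intro: rot_orth rot_det)
  thus ?thesis unfolding eq iso_cone_def by blast
qed

lemma Phi2_real:
  assumes zr: "\<forall>i<7. z i \<in> \<real>" and z0: "z 0 \<noteq> 0"
  shows "Phi2 z \<in> iso_cone"
proof -
  define r where "r = (\<lambda>i. Re (z i))"
  note R = real_setup[OF zr z0, folded r_def]
  define s where "s = sgen r"
  have s: "s > 0" "s \<noteq> 0" using R(4) s_def by auto
  define M where "M = mk3 (\<lambda>j k. Ngen r j k / s)"
  define x where "x = vec3 (\<lambda>k. r (4 + k) / s)"
  define y where "y = - (M *v x)"
  have orth: "orthogonal_matrix M" "det M = 1" unfolding M_def s_def using R(4) by (auto intro: rot_orth rot_det)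
  have tmx: "transpose M *v y = - x" unfolding y_def
    using orth(1) by (simp add: matrix_vector_mul_assoc orthogonal_matrix_def mv_neg)
  have yy: "y \<bullet> y = x \<bullet> x" unfolding y_def
    using orth_norm[of "transpose M" x] orth(1) by simp
  have zz: "\<And>j. j < 3 \<Longrightarrow> z (4 + j) = complex_of_real (r (4 + j))" using R(1) by (auto simp: r_def)
  have eq: "Phi2 z = (\<lambda>i. complex_of_real (s * s) * iso_point M y i)"
  proof
    fix i :: nat
    consider "i = 0" | "0 < i" "i < 10" | "10 \<le> i" "i < 13" | "13 \<le> i" "i < 16" | "i = 16" | "16 < i"
      by linarith
    then show "Phi2 z i = complex_of_real (s * s) * iso_point M y i"
    proof cases
      case 1 then show ?thesis by (simp add: Phi2_def iso_point_def R(3) s_def)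
    next
      case 2
      have "comp3 (M $ of_nat ((i - 1) div 3)) ((i - 1) mod 3) = Ngen r ((i - 1) div 3) ((i - 1) mod 3) / s"
        unfolding M_def using 2 by (intro C3) auto
      then show ?thesis using 2 s by (simp add: Phi2_def iso_point_def R(2,3) s_def[symmetric] field_simps flip: of_real_mult)
    next
      case 3
      have k: "i - 10 < 3" using 3 by auto
      have c: "s * s * comp3 x (i - 10) = s * r (4 + (i - 10))" unfolding x_def C4[OF k] using s by simp
      have "Phi2 z i = complex_of_real (s * r (4 + (i - 10)))"
        using 3 zz[OF k] by (simp add: Phi2_def R(3) s_def)
      also have "\<dots> = complex_of_real (s * s) * complex_of_real (comp3 x (i - 10))"
        by (simp only: of_real_mult[symmetric] c)
      also have "\<dots> = complex_of_real (s * s) * iso_point M y i"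
        using 3 by (simp add: iso_point_def tmx C5 del: transpose_matrix_vector)
      finally show ?thesis .
    next
      case 4
      have k: "i - 13 < 3" using 4 by auto
      have c: "comp3 y (i - 13) = - (\<Sum>j<3. Ngen r (i - 13) j / s * (r (4 + j) / s))"
        unfolding y_def C5 C2[OF k] M_def x_def using k by (simp add: C3 C4)
      have c2: "s * s * comp3 y (i - 13) = - (\<Sum>j<3. Ngen r (i - 13) j * r (4 + j))"
        unfolding c using s by (simp add: sum_lt3 field_simps)
      have c3: "(\<Sum>j<3. Ngen z (i - 13) j * z (4 + j)) = complex_of_real (\<Sum>j<3. Ngen r (i - 13) j * r (4 + j))"
        by (simp add: R(2) zz)
      have "Phi2 z i = - complex_of_real (\<Sum>j<3. Ngen r (i - 13) j * r (4 + j))"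
        using 4 c3 by (simp add: Phi2_def)
      also have "\<dots> = complex_of_real (s * s * comp3 y (i - 13))"
        unfolding c2 by simp
      also have "\<dots> = complex_of_real (s * s) * iso_point M y i"
        using 4 by (simp add: iso_point_def)
      finally show ?thesis .
    next
      case 5
      have "x \<bullet> x = (\<Sum>k<3. (r (4 + k) / s) * (r (4 + k) / s))" by (simp only: C6[of x x]) (simp add: x_def C4)
      hence "y \<bullet> y = (\<Sum>k<3. (r (4 + k) / s) * (r (4 + k) / s))" using yy by simp
      hence c: "s * s * (y \<bullet> y) = (\<Sum>k<3. r (4 + k) * r (4 + k))" using s by (simp add: sum_lt3 field_simps)
      have "Phi2 z i = complex_of_real (\<Sum>k<3. r (4 + k) * r (4 + k))"
        using 5 by (simp add: Phi2_def zz)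
      also have "\<dots> = complex_of_real (s * s) * complex_of_real (y \<bullet> y)"
        by (simp only: of_real_mult[symmetric] c)
      also have "\<dots> = complex_of_real (s * s) * iso_point M y i"
        using 5 by (simp add: iso_point_def)
      finally show ?thesis .
    next
      case 6 then show ?thesis by (simp add: Phi2_def iso_point_def)
    qed
  qed
  show ?thesis unfolding eq iso_cone_def using orth by blast
qed

lemma Phi1_X: "Phi1 z \<in> Xcone"
  by (rule family_in_X[of Phi1 7]) (auto intro: Phi1_pf Phi1_real)

lemma Phi2_X: "Phi2 z \<in> Xcone"
  by (rule family_in_X[of Phi2 7]) (auto intro: Phi2_pf Phi2_real)

definition zq :: "(nat \<Rightarrow> real) \<Rightarrow> real \<Rightarrow> nat \<Rightarrow> complex" where
  "zq U w = (\<lambda>i. if i = 0 then complex_of_real w else if i = 1 then \<i> * complex_of_real (U 0)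
     else if i = 2 then \<i> * complex_of_real (U 1) else \<i> * complex_of_real (U 2))"

lemma zq_s: "w * w = U 0 * U 0 + U 1 * U 1 + U 2 * U 2 \<Longrightarrow> sgen (zq U w) = 0"
  unfolding sgen_def zq_def by (simp add: complex_eq_iff)

lemma zq_F1: "w * w = U 0 * U 0 + U 1 * U 1 + U 2 * U 2 \<Longrightarrow> k < 3 \<Longrightarrow>
   (\<Sum>j<3. Ngen (zq U w) j k * complex_of_real (U j)) = 0"
  by (auto dest!: lt3_cases simp: sum_lt3 Ngen_def zq_def complex_eq_iff algebra_simps)

lemma zq_F2: "w * w = U 0 * U 0 + U 1 * U 1 + U 2 * U 2 \<Longrightarrow> j < 3 \<Longrightarrow>
   (\<Sum>k<3. Ngen (zq U w) j k * complex_of_real (U k)) = 0"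
  by (auto dest!: lt3_cases simp: sum_lt3 Ngen_def zq_def complex_eq_iff algebra_simps)

lemma zq_Re: "w * w = U 0 * U 0 + U 1 * U 1 + U 2 * U 2 \<Longrightarrow> j < 3 \<Longrightarrow> k < 3 \<Longrightarrow>
   Re (Ngen (zq U w) j k) = 2 * ((if j = k then U 0 * U 0 + U 1 * U 1 + U 2 * U 2 else 0) - U j * U k)"
  by (auto dest!: lt3_cases simp: Ngen_def zq_def algebra_simps)

lemma comp3_add: "comp3 (a + b) k = comp3 a k + comp3 b k" by (simp add: comp3_def)
lemma comp3_scale: "comp3 (c *\<^sub>R b) k = c * comp3 b k" by (simp add: comp3_def)

lemma nz_comp: "(Y0::real^3) \<noteq> 0 \<Longrightarrow> \<exists>k<3. comp3 Y0 k \<noteq> 0"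
proof (rule ccontr)
  assume "Y0 \<noteq> 0" "\<not> (\<exists>k<3. comp3 Y0 k \<noteq> 0)"
  hence h: "\<And>k. k < 3 \<Longrightarrow> comp3 Y0 k = 0" by auto
  have "comp3 Y0 0 = 0" "comp3 Y0 1 = 0" "comp3 Y0 2 = 0" using h[of 0] h[of 1] h[of 2] by auto
  hence "Y0 $ 1 = 0" "Y0 $ 2 = 0" "Y0 $ 3 = 0" by simp_all
  hence "Y0 = 0" by (simp add: vec_eq_iff forall_3)
  thus False using \<open>Y0 \<noteq> 0\<close> by simp
qed

lemma construct_x:
  fixes u a :: "real^3" and p :: "nat \<Rightarrow> real^3" and n :: nat
  assumes u: "u \<noteq> 0" and pa: "\<forall>i<n. \<exists>c. p i = a + c *\<^sub>R u"
  shows "\<exists>v. v \<in> Xcone \<and> hC v = 0 \<and> (\<forall>j<3. \<forall>k<3. mC v j k = 0) \<and> (\<forall>k<3. yC v k = 0)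
     \<and> \<not> (\<forall>k<3. xC v k = 0) \<and> (\<forall>i<n. \<forall>P d. lform (p i) P d v = 0)"
proof -
  obtain Y0 :: "real^3" where Y0: "Y0 \<noteq> 0" "orthogonal u Y0"
    using orthogonal_to_vector_exists[of u] by auto
  define U where "U = (\<lambda>k. comp3 u k)"
  define V where "V = (\<lambda>k. comp3 Y0 k)"
  define A where "A = (\<lambda>k. comp3 a k)"
  define w where "w = norm u"
  define SU where "SU = U 0 * U 0 + U 1 * U 1 + U 2 * U 2"
  have uu: "u \<bullet> u = SU" unfolding SU_def U_def C6 sum_lt3 by simp
  have ww: "w * w = U 0 * U 0 + U 1 * U 1 + U 2 * U 2"
    using uu unfolding w_def SU_def by (simp add: dot_square_norm power2_eq_square)
  have SUpos: "SU > 0" using u uu by (metis inner_gt_zero_iff)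
  have UV: "U 0 * V 0 + U 1 * V 1 + U 2 * V 2 = 0"
    using Y0(2) unfolding orthogonal_def C6 sum_lt3 U_def V_def by simp
  define Q where "Q = zq U w"
  define xv where "xv = (\<lambda>k. - (\<Sum>j<3. Ngen Q j k * complex_of_real (V j)))"
  define T where "T = 2 * (\<Sum>k<3. complex_of_real (A k) * xv k)"
  define SV where "SV = V 0 * V 0 + V 1 * V 1 + V 2 * V 2"
  define lam where "lam = csqrt ((T - complex_of_real SV) / complex_of_real SU)"
  define z where "z = (\<lambda>i. if i < 4 then Q i else if i < 7 then complex_of_real (V (i - 4)) + lam * complex_of_real (U (i - 4)) else 0)"
  define v where "v = Phi1 z"
  have NQ: "Ngen z j k = Ngen Q j k" for j k unfolding Ngen_def z_def by simp
  have NQ': "Ngen z = Ngen Q" using NQ by (intro ext) auto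
  have sz: "sgen z = 0" using zq_s[OF ww] unfolding Q_def[symmetric] sgen_def z_def by simp
  have F1: "(\<Sum>j<3. Ngen Q j k * complex_of_real (U j)) = 0" if "k < 3" for k
    using zq_F1[OF ww that] Q_def by simp
  have F2: "(\<Sum>k<3. Ngen Q j k * complex_of_real (U k)) = 0" if "j < 3" for j
    using zq_F2[OF ww that] Q_def by simp
  have xC: "xC v k = xv k" if k: "k < 3" for k
  proof -
    have "xC v k = - (\<Sum>j<3. Ngen Q j k * (complex_of_real (V j) + lam * complex_of_real (U j)))"
      using k unfolding xC_def v_def Phi1_def NQ' by (simp add: z_def)
    also have "\<dots> = xv k - lam * (\<Sum>j<3. Ngen Q j k * complex_of_real (U j))"
      unfolding xv_def by (simp add: sum_lt3 algebra_simps)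
    finally show ?thesis using F1[OF k] by simp
  qed
  have hv: "hC v = 0" unfolding hC_def v_def Phi1_def by (simp add: sz)
  have mv: "\<forall>j<3. \<forall>k<3. mC v j k = 0" unfolding mC_def v_def Phi1_def by (simp add: sz)
  have yv: "\<forall>k<3. yC v k = 0" unfolding yC_def v_def Phi1_def by (simp add: sz)
  have xnz: "\<not> (\<forall>k<3. xC v k = 0)"
  proof -
    obtain k where k: "k < 3" "V k \<noteq> 0" using nz_comp[OF Y0(1)] V_def by auto
    have "Re (xv k) = - (\<Sum>j<3. Re (Ngen Q j k) * V j)"
      unfolding xv_def by (simp add: sum_lt3)
    also have "\<dots> = - 2 * SU * V k + 2 * U k * (U 0 * V 0 + U 1 * V 1 + U 2 * V 2)"
      using k(1) unfolding Q_def SU_def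
      by (auto dest!: lt3_cases simp: sum_lt3 zq_Re[OF ww] algebra_simps)
    also have "\<dots> = - 2 * SU * V k" using UV by simp
    finally have "Re (xv k) \<noteq> 0" using k(2) SUpos by simp
    hence "xC v k \<noteq> 0" using xC[OF k(1)] by auto
    thus ?thesis using k(1) by blast
  qed
  have ux: "(\<Sum>k<3. complex_of_real (U k) * xv k) = 0"
  proof -
    have "(\<Sum>k<3. complex_of_real (U k) * xv k) = - (\<Sum>j<3. complex_of_real (V j) * (\<Sum>k<3. Ngen Q j k * complex_of_real (U k)))"
      unfolding xv_def by (simp add: sum_lt3 algebra_simps)
    also have "\<dots> = 0" using F2 by simp
    finally show ?thesis .
  qed
  have rv: "rC v = T"
  proof -
    have "rC v = (\<Sum>k<3. (complex_of_real (V k) + lam * complex_of_real (U k)) * (complex_of_real (V k) + lam * complex_of_real (U k)))"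
      unfolding rC_def v_def Phi1_def by (simp add: z_def)
    also have "\<dots> = complex_of_real SV + 2 * lam * complex_of_real (U 0 * V 0 + U 1 * V 1 + U 2 * V 2) + lam * lam * complex_of_real SU"
      unfolding SV_def SU_def by (simp add: sum_lt3 algebra_simps)
    finally have r1: "rC v = complex_of_real SV + 2 * lam * complex_of_real (U 0 * V 0 + U 1 * V 1 + U 2 * V 2) + lam * lam * complex_of_real SU" .
    have uv0: "complex_of_real (U 0 * V 0 + U 1 * V 1 + U 2 * V 2) = 0" using UV by (simp only: of_real_0)
    have r2: "rC v = complex_of_real SV + lam * lam * complex_of_real SU"
      using r1 unfolding uv0 by simp
    have "lam * lam = (T - complex_of_real SV) / complex_of_real SU"
      unfolding lam_def by (metis power2_csqrt power2_eq_square)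
    thus ?thesis using r2 SUpos by simp
  qed
  have lv: "\<forall>i<n. \<forall>P d. lform (p i) P d v = 0"
  proof (intro allI impI)
    fix i P d assume i: "i < n"
    obtain c where c: "p i = a + c *\<^sub>R u" using pa i by auto
    have "(\<Sum>k<3. complex_of_real (comp3 (p i) k) * xC v k) = (\<Sum>k<3. complex_of_real (A k) * xv k) + complex_of_real c * (\<Sum>k<3. complex_of_real (U k) * xv k)"
      unfolding c comp3_add comp3_scale A_def U_def by (simp add: sum_lt3 xC algebra_simps)
    hence "(\<Sum>k<3. complex_of_real (comp3 (p i) k) * xC v k) = T / 2" using ux unfolding T_def by simp
    thus "lform (p i) P d v = 0" unfolding lform_simp[OF hv mv yv] rv by (simp add: mult.commute)
  qed
  show ?thesis using Phi1_X hv mv yv xnz lv unfolding v_def by blast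
qed

lemma lform_simp2:
  assumes "hC v = 0" "\<forall>j<3. \<forall>k<3. mC v j k = 0" "\<forall>k<3. xC v k = 0"
  shows "lform p P d v = rC v - 2 * (\<Sum>k<3. yC v k * complex_of_real (comp3 P k))"
proof -
  have "(\<Sum>k<3. complex_of_real (comp3 p k) * xC v k) = 0" using assms(3) by (intro sum.neutral) auto
  moreover have "(\<Sum>j<3. \<Sum>k<3. complex_of_real (comp3 P j) * mC v j k * complex_of_real (comp3 p k)) = 0"
    using assms(2) by (intro sum.neutral) auto
  ultimately show ?thesis unfolding lform_def using assms(1) by simp
qed

lemma construct_y:
  fixes u a :: "real^3" and P :: "nat \<Rightarrow> real^3" and n :: nat
  assumes u: "u \<noteq> 0" and pa: "\<forall>i<n. \<exists>c. P i = a + c *\<^sub>R u"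
  shows "\<exists>v. v \<in> Xcone \<and> hC v = 0 \<and> (\<forall>j<3. \<forall>k<3. mC v j k = 0) \<and> (\<forall>k<3. xC v k = 0)
     \<and> \<not> (\<forall>k<3. yC v k = 0) \<and> (\<forall>i<n. \<forall>p d. lform p (P i) d v = 0)"
proof -
  obtain Y0 :: "real^3" where Y0: "Y0 \<noteq> 0" "orthogonal u Y0"
    using orthogonal_to_vector_exists[of u] by auto
  define U where "U = (\<lambda>k. comp3 u k)"
  define V where "V = (\<lambda>k. comp3 Y0 k)"
  define A where "A = (\<lambda>k. comp3 a k)"
  define w where "w = norm u"
  define SU where "SU = U 0 * U 0 + U 1 * U 1 + U 2 * U 2"
  have uu: "u \<bullet> u = SU" unfolding SU_def U_def C6 sum_lt3 by simp
  have ww: "w * w = U 0 * U 0 + U 1 * U 1 + U 2 * U 2"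
    using uu unfolding w_def SU_def by (simp add: dot_square_norm power2_eq_square)
  have SUpos: "SU > 0" using u uu by (metis inner_gt_zero_iff)
  have UV: "U 0 * V 0 + U 1 * V 1 + U 2 * V 2 = 0"
    using Y0(2) unfolding orthogonal_def C6 sum_lt3 U_def V_def by simp
  define Q where "Q = zq U w"
  define xv where "xv = (\<lambda>k. - (\<Sum>j<3. Ngen Q k j * complex_of_real (V j)))"
  define T where "T = 2 * (\<Sum>k<3. complex_of_real (A k) * xv k)"
  define SV where "SV = V 0 * V 0 + V 1 * V 1 + V 2 * V 2"
  define lam where "lam = csqrt ((T - complex_of_real SV) / complex_of_real SU)"
  define z where "z = (\<lambda>i. if i < 4 then Q i else if i < 7 then complex_of_real (V (i - 4)) + lam * complex_of_real (U (i - 4)) else 0)"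
  define v where "v = Phi2 z"
  have NQ: "Ngen z j k = Ngen Q j k" for j k unfolding Ngen_def z_def by simp
  have NQ': "Ngen z = Ngen Q" using NQ by (intro ext) auto
  have sz: "sgen z = 0" using zq_s[OF ww] unfolding Q_def[symmetric] sgen_def z_def by simp
  have F1: "(\<Sum>j<3. Ngen Q j k * complex_of_real (U j)) = 0" if "k < 3" for k
    using zq_F1[OF ww that] Q_def by simp
  have F2: "(\<Sum>k<3. Ngen Q j k * complex_of_real (U k)) = 0" if "j < 3" for j
    using zq_F2[OF ww that] Q_def by simp
  have yC: "yC v k = xv k" if k: "k < 3" for k
  proof -
    have "yC v k = - (\<Sum>j<3. Ngen Q k j * (complex_of_real (V j) + lam * complex_of_real (U j)))"
      using k unfolding yC_def v_def Phi2_def NQ' by (simp add: z_def)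
    also have "\<dots> = xv k - lam * (\<Sum>j<3. Ngen Q k j * complex_of_real (U j))"
      unfolding xv_def by (simp add: sum_lt3 algebra_simps)
    finally show ?thesis using F2[OF k] by simp
  qed
  have hv: "hC v = 0" unfolding hC_def v_def Phi2_def by (simp add: sz)
  have mv: "\<forall>j<3. \<forall>k<3. mC v j k = 0" unfolding mC_def v_def Phi2_def by (simp add: sz)
  have yv: "\<forall>k<3. xC v k = 0" unfolding xC_def v_def Phi2_def by (simp add: sz)
  have xnz: "\<not> (\<forall>k<3. yC v k = 0)"
  proof -
    obtain k where k: "k < 3" "V k \<noteq> 0" using nz_comp[OF Y0(1)] V_def by auto
    have "Re (xv k) = - (\<Sum>j<3. Re (Ngen Q k j) * V j)"
      unfolding xv_def by (simp add: sum_lt3)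
    also have "\<dots> = - 2 * SU * V k + 2 * U k * (U 0 * V 0 + U 1 * V 1 + U 2 * V 2)"
      using k(1) unfolding Q_def SU_def
      by (auto dest!: lt3_cases simp: sum_lt3 zq_Re[OF ww] algebra_simps)
    also have "\<dots> = - 2 * SU * V k" using UV by simp
    finally have "Re (xv k) \<noteq> 0" using k(2) SUpos by simp
    hence "yC v k \<noteq> 0" using yC[OF k(1)] by auto
    thus ?thesis using k(1) by blast
  qed
  have ux: "(\<Sum>k<3. complex_of_real (U k) * xv k) = 0"
  proof -
    have "(\<Sum>k<3. complex_of_real (U k) * xv k) = - (\<Sum>j<3. complex_of_real (V j) * (\<Sum>k<3. Ngen Q k j * complex_of_real (U k)))"
      unfolding xv_def by (simp add: sum_lt3 algebra_simps)
    also have "\<dots> = 0" using F1 by simp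
    finally show ?thesis .
  qed
  have rv: "rC v = T"
  proof -
    have "rC v = (\<Sum>k<3. (complex_of_real (V k) + lam * complex_of_real (U k)) * (complex_of_real (V k) + lam * complex_of_real (U k)))"
      unfolding rC_def v_def Phi2_def by (simp add: z_def)
    also have "\<dots> = complex_of_real SV + 2 * lam * complex_of_real (U 0 * V 0 + U 1 * V 1 + U 2 * V 2) + lam * lam * complex_of_real SU"
      unfolding SV_def SU_def by (simp add: sum_lt3 algebra_simps)
    finally have r1: "rC v = complex_of_real SV + 2 * lam * complex_of_real (U 0 * V 0 + U 1 * V 1 + U 2 * V 2) + lam * lam * complex_of_real SU" .
    have uv0: "complex_of_real (U 0 * V 0 + U 1 * V 1 + U 2 * V 2) = 0" using UV by (simp only: of_real_0)
    have r2: "rC v = complex_of_real SV + lam * lam * complex_of_real SU"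
      using r1 unfolding uv0 by simp
    have "lam * lam = (T - complex_of_real SV) / complex_of_real SU"
      unfolding lam_def by (metis power2_csqrt power2_eq_square)
    thus ?thesis using r2 SUpos by simp
  qed
  have lv: "\<forall>i<n. \<forall>p d. lform p (P i) d v = 0"
  proof (intro allI impI)
    fix i p d assume i: "i < n"
    obtain c where c: "P i = a + c *\<^sub>R u" using pa i by auto
    have "(\<Sum>k<3. yC v k * complex_of_real (comp3 (P i) k)) = (\<Sum>k<3. complex_of_real (A k) * xv k) + complex_of_real c * (\<Sum>k<3. complex_of_real (U k) * xv k)"
      unfolding c comp3_add comp3_scale A_def U_def by (simp add: sum_lt3 yC algebra_simps)
    hence "(\<Sum>k<3. yC v k * complex_of_real (comp3 (P i) k)) = T / 2" using ux unfolding T_def by simp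
    thus "lform p (P i) d v = 0" unfolding lform_simp2[OF hv mv yv] rv by (simp add: mult.commute)
  qed
  show ?thesis using Phi2_X hv mv yv xnz lv unfolding v_def by blast
qed

lemma onlyif_y:
  fixes n :: nat and p P :: "nat \<Rightarrow> real^3" and d :: "nat \<Rightarrow> real"
  assumes X: "v \<in> Xcone" and h: "hC v = 0" and m: "\<forall>j<3. \<forall>k<3. mC v j k = 0"
    and x: "\<forall>k<3. xC v k = 0" and y: "\<not> (\<forall>k<3. yC v k = 0)"
    and l: "\<forall>i<n. lform (p i) (P i) (d i) v = 0"
  shows "collinear (P ` {..<n})"
proof -
  define a :: "real^3" where "a = vector [Re (yC v 1), Re (yC v 2), Re (yC v 0)]"
  define b :: "real^3" where "b = vector [Im (yC v 1), Im (yC v 2), Im (yC v 0)]"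
  have Q: "(\<Sum>k<3. yC v k * yC v k) = 0" using Q_X[OF X] h unfolding Qy_def by simp
  hence q: "Re (\<Sum>k<3. yC v k * yC v k) = 0" "Im (\<Sum>k<3. yC v k * yC v k) = 0" by simp_all
  have ab1: "a \<bullet> a = b \<bullet> b" using q(1) unfolding sum_lt3 a_def b_def
    by (simp add: inner_vec_def sum_3 vector_3 algebra_simps)
  have ab2: "a \<bullet> b = 0" using q(2) unfolding sum_lt3 a_def b_def
    by (simp add: inner_vec_def sum_3 vector_3 algebra_simps)
  have nz: "a \<noteq> 0 \<or> b \<noteq> 0"
  proof (rule ccontr)
    assume "\<not> ?thesis"
    hence "a $ 1 = 0" "a $ 2 = 0" "a $ 3 = 0" "b $ 1 = 0" "b $ 2 = 0" "b $ 3 = 0" by auto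
    hence "yC v 0 = 0" "yC v 1 = 0" "yC v 2 = 0" unfolding a_def b_def
      by (simp_all add: vector_3 complex_eq_iff)
    hence "\<forall>k<3. yC v k = 0" by (simp add: lessThan3 flip: lessThan_iff)
    thus False using y by simp
  qed
  have L: "rC v = 2 * (\<Sum>k<3. yC v k * complex_of_real (comp3 (P i) k))" if "i < n" for i
    using l that lform_simp2[OF h m x, of "p i" "P i" "d i"] by simp
  have orth: "(P i - P j) \<bullet> a = 0 \<and> (P i - P j) \<bullet> b = 0" if "i < n" "j < n" for i j
  proof -
    have "(\<Sum>k<3. yC v k * complex_of_real (comp3 (P i) k)) - (\<Sum>k<3. yC v k * complex_of_real (comp3 (P j) k)) = 0"
      using L[OF that(1)] L[OF that(2)] by simp
    hence "Re ((\<Sum>k<3. yC v k * complex_of_real (comp3 (P i) k)) - (\<Sum>k<3. yC v k * complex_of_real (comp3 (P j) k))) = 0"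
      "Im ((\<Sum>k<3. yC v k * complex_of_real (comp3 (P i) k)) - (\<Sum>k<3. yC v k * complex_of_real (comp3 (P j) k))) = 0"
      by simp_all
    thus ?thesis unfolding sum_lt3 a_def b_def
      by (simp add: inner_vec_def sum_3 vector_3 algebra_simps)
  qed
  show ?thesis using LA[OF ab1 ab2 nz, of n P] orth by blast
qed

lemma collinear_dir:
  fixes p :: "nat \<Rightarrow> real^3"
  assumes "collinear (p ` {..<n})"
  shows "\<exists>u a. u \<noteq> 0 \<and> (\<forall>i<n. \<exists>c. p i = a + c *\<^sub>R u)"
proof -
  obtain u where u: "\<forall>x\<in>p ` {..<n}. \<forall>y\<in>p ` {..<n}. \<exists>c. x - y = c *\<^sub>R u"
    using assms unfolding collinear_def by blast
  define u' :: "real^3" where "u' = (if u = 0 then axis 1 1 else u)"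
  have u': "u' \<noteq> 0" unfolding u'_def by (simp add: axis_eq_0_iff)
  have "\<forall>i<n. \<exists>c. p i = p 0 + c *\<^sub>R u'"
  proof (intro allI impI)
    fix i assume i: "i < n"
    then obtain c where c: "p i - p 0 = c *\<^sub>R u" using u by force
    show "\<exists>c. p i = p 0 + c *\<^sub>R u'"
    proof (cases "u = 0")
      case True thus ?thesis using c by (intro exI[of _ 0]) simp
    next
      case False thus ?thesis using c unfolding u'_def by (intro exI[of _ c]) (simp add: algebra_simps)
    qed
  qed
  thus ?thesis using u' by blast
qed

theorem mainTheorem7:
  fixes n :: nat and p P :: "nat \<Rightarrow> real^3" and d :: "nat \<Rightarrow> real"
  assumes "\<forall>i<n. d i \<ge> 0"
  shows "has_collinearity_bond n p P d \<longleftrightarrow>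
           (collinear (p ` {..<n}) \<or> collinear (P ` {..<n}))"
proof
  assume "has_collinearity_bond n p P d"
  then obtain v where v: "v \<in> bonds n p P d" "collinearity_point v"
    unfolding has_collinearity_bond_def by blast
  have X: "v \<in> Xcone" and l: "\<forall>i<n. lform (p i) (P i) (d i) v = 0"
    using v(1) unfolding bonds_def K_Pi_def by auto
  have h: "hC v = 0" and m: "\<forall>j<3. \<forall>k<3. mC v j k = 0"
    and xy: "(\<forall>k<3. xC v k = 0) \<noteq> (\<forall>k<3. yC v k = 0)"
    using v(2) unfolding collinearity_point_def by auto
  show "collinear (p ` {..<n}) \<or> collinear (P ` {..<n})"
  proof (cases "\<forall>k<3. yC v k = 0")
    case True
    hence "\<not> (\<forall>k<3. xC v k = 0)" using xy by simp
    thus ?thesis using onlyif_x[OF X h m True _ l] by blast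
  next
    case False
    hence "\<forall>k<3. xC v k = 0" using xy by simp
    thus ?thesis using onlyif_y[OF X h m _ False l] by blast
  qed
next
  assume "collinear (p ` {..<n}) \<or> collinear (P ` {..<n})"
  thus "has_collinearity_bond n p P d"
  proof
    assume "collinear (p ` {..<n})"
    then obtain u a where ua: "u \<noteq> 0" "\<forall>i<n. \<exists>c. p i = a + c *\<^sub>R u"
      using collinear_dir by blast
    obtain v where v: "v \<in> Xcone" "hC v = 0" "\<forall>j<3. \<forall>k<3. mC v j k = 0" "\<forall>k<3. yC v k = 0"
      "\<not> (\<forall>k<3. xC v k = 0)" "\<forall>i<n. \<forall>P d. lform (p i) P d v = 0"
      using construct_x[OF ua] by blast
    have nz: "v \<noteq> (\<lambda>_. 0)" using v(5) unfolding xC_def by auto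
    have "v \<in> bonds n p P d" unfolding bonds_def K_Pi_def B_set_def using v nz by auto
    moreover have "collinearity_point v" unfolding collinearity_point_def B_set_def using v nz by auto
    ultimately show ?thesis unfolding has_collinearity_bond_def by blast
  next
    assume "collinear (P ` {..<n})"
    then obtain u a where ua: "u \<noteq> 0" "\<forall>i<n. \<exists>c. P i = a + c *\<^sub>R u"
      using collinear_dir by blast
    obtain v where v: "v \<in> Xcone" "hC v = 0" "\<forall>j<3. \<forall>k<3. mC v j k = 0" "\<forall>k<3. xC v k = 0"
      "\<not> (\<forall>k<3. yC v k = 0)" "\<forall>i<n. \<forall>p d. lform p (P i) d v = 0"
      using construct_y[OF ua] by blast
    have nz: "v \<noteq> (\<lambda>_. 0)" using v(5) unfolding yC_def by auto
    have "v \<in> bonds n p P d" unfolding bonds_def K_Pi_def B_set_def using v nz by auto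
    moreover have "collinearity_point v" unfolding collinearity_point_def B_set_def using v nz by auto
    ultimately show ?thesis unfolding has_collinearity_bond_def by blast
  qed
qed

end
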